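(* Let $t\ge1$ and $k\ge1$ be integers. If a connected graph $G$ admits a (multiplicative) $t$-spanner with tree-width $k-1$, then $\mathrm{tb}_k(G)\leq\lceil t/2\rceil$.
   Context: Graphs are finite, connected, unweighted, undirected and simple; $d_G$ is the shortest-path distance and $D_r(v,G)=\{u: d_G(u,v)\le r\}$. A spanning subgraph $H$ of $G$ is a (multiplicative) $t$-spanner if $d_H(u,v)\le t\cdot d_G(u,v)$ for all $u,v$. A tree-decomposition of $G=(V,E)$ is a pair $(\{X_i\mid i\in I\},T=(I,F))$ with $T$ a tree and bags $X_i\subseteq V$ such that (1) $\bigcup_i X_i=V$; (2) every edge lies in some bag; (3) for each $v\in V$ the nodes containing $v$ induce a connected subtree of $T$. Its width is $\max_i|X_i|-1$ and tree-width is the minimum width. Its $k$-breadth is the minimum integer $r$ such that every bag $X_i$ is contained in $D_r(v^i_1,G)\cup\dots\cup D_r(v^i_k,G)$ for some vertices $v^i_1,\dots,v^i_k$ of $G$; $\mathrm{tb}_k(G)$ is the minimum $k$-breadth over all tree-decompositions of $G$. *)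

theory Defs
  imports Complex_Main "HOL-Library.Extended_Nat"
begin

definition graph :: "'a set \<Rightarrow> 'a set set \<Rightarrow> bool" where
  "graph V E \<longleftrightarrow> finite V \<and> (\<forall>e\<in>E. card e = 2 \<and> e \<subseteq> V)"

definition walk :: "'a set \<Rightarrow> 'a set set \<Rightarrow> 'a list \<Rightarrow> bool" where
  "walk V E xs \<longleftrightarrow> xs \<noteq> [] \<and> set xs \<subseteq> V \<and>
     (\<forall>i. Suc i < length xs \<longrightarrow> {xs ! i, xs ! Suc i} \<in> E)"

definition connected_graph :: "'a set \<Rightarrow> 'a set set \<Rightarrow> bool" where
  "connected_graph V E \<longleftrightarrow>
     (\<forall>u\<in>V. \<forall>v\<in>V. \<exists>xs. walk V E xs \<and> hd xs = u \<and> last xs = v)"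

definition gdist :: "'a set \<Rightarrow> 'a set set \<Rightarrow> 'a \<Rightarrow> 'a \<Rightarrow> enat" where
  "gdist V E u v = Inf {enat (length xs - 1) | xs. walk V E xs \<and> hd xs = u \<and> last xs = v}"

definition disk :: "'a set \<Rightarrow> 'a set set \<Rightarrow> nat \<Rightarrow> 'a \<Rightarrow> 'a set" where
  "disk V E r v = {u\<in>V. gdist V E u v \<le> enat r}"

definition tree :: "'b set \<Rightarrow> 'b set set \<Rightarrow> bool" where
  "tree I F \<longleftrightarrow> graph I F \<and> I \<noteq> {} \<and> connected_graph I F \<and> card F = card I - 1"

definition tree_decomp :: "'a set \<Rightarrow> 'a set set \<Rightarrow> 'b set \<Rightarrow> 'b set set \<Rightarrow> ('b \<Rightarrow> 'a set) \<Rightarrow> bool" where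
  "tree_decomp V E I F X \<longleftrightarrow> tree I F \<and> (\<forall>i\<in>I. X i \<subseteq> V) \<and>
     (\<Union>i\<in>I. X i) = V \<and>
     (\<forall>e\<in>E. \<exists>i\<in>I. e \<subseteq> X i) \<and>
     (\<forall>v\<in>V. connected_graph {i\<in>I. v \<in> X i} {f\<in>F. f \<subseteq> {i\<in>I. v \<in> X i}})"

definition td_width :: "'b set \<Rightarrow> ('b \<Rightarrow> 'a set) \<Rightarrow> nat" where
  "td_width I X = Max ((\<lambda>i. card (X i)) ` I) - 1"

text \<open>Tree-width: minimum width over all tree-decompositions (indices taken in nat,
  which is no loss of generality for finite trees).\<close>
definition treewidth :: "'a set \<Rightarrow> 'a set set \<Rightarrow> nat" where
  "treewidth V E = (LEAST w. \<exists>(I::nat set) F X. tree_decomp V E I F X \<and> td_width I X = w)"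

definition breadth_le :: "'a set \<Rightarrow> 'a set set \<Rightarrow> nat \<Rightarrow> 'b set \<Rightarrow> ('b \<Rightarrow> 'a set) \<Rightarrow> nat \<Rightarrow> bool" where
  "breadth_le V E k I X r \<longleftrightarrow>
     (\<forall>i\<in>I. \<exists>c::nat \<Rightarrow> 'a. (\<forall>j<k. c j \<in> V) \<and> X i \<subseteq> (\<Union>j<k. disk V E r (c j)))"

definition tb :: "nat \<Rightarrow> 'a set \<Rightarrow> 'a set set \<Rightarrow> nat" where
  "tb k V E = (LEAST r. \<exists>(I::nat set) F X. tree_decomp V E I F X \<and> breadth_le V E k I X r)"

definition spanner :: "'a set \<Rightarrow> 'a set set \<Rightarrow> 'a set set \<Rightarrow> nat \<Rightarrow> bool" where
  "spanner V E F t \<longleftrightarrow> F \<subseteq> E \<and>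
     (\<forall>u\<in>V. \<forall>v\<in>V. gdist V F u v \<le> enat t * gdist V E u v)"

end

theory Submission
  imports Defs
begin

lemma walk_Cons:
  "walk V E (x # xs) \<longleftrightarrow> x \<in> V \<and> (xs = [] \<or> ({x, hd xs} \<in> E \<and> walk V E xs))"
proof (cases xs)
  case Nil thus ?thesis by (simp add: walk_def)
next
  case (Cons y ys)
  have "(\<forall>i. Suc i < length (x#xs) \<longrightarrow> {(x#xs)!i, (x#xs)!Suc i} \<in> E) \<longleftrightarrow>
        {x,y} \<in> E \<and> (\<forall>i. Suc i < length xs \<longrightarrow> {xs!i, xs!Suc i} \<in> E)"
    (is "?L \<longleftrightarrow> ?R")
  proof
    assume L: ?L
    have "{x,y}\<in>E" using L[rule_format, of 0] Cons by simp
    moreover have "\<forall>i. Suc i < length xs \<longrightarrow> {xs!i, xs!Suc i} \<in> E"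
    proof (intro allI impI)
      fix i assume "Suc i < length xs"
      then show "{xs!i, xs!Suc i} \<in> E" using L[rule_format, of "Suc i"] by simp
    qed
    ultimately show ?R by blast
  next
    assume R: ?R
    show ?L
    proof (intro allI impI)
      fix i assume "Suc i < length (x#xs)"
      then show "{(x#xs)!i, (x#xs)!Suc i} \<in> E" using R Cons by (cases i) auto
    qed
  qed
  then show ?thesis using Cons by (auto simp: walk_def)
qed

lemma walk_Nil[simp]: "\<not> walk V E []" by (simp add: walk_def)

lemma walk_append:
  "walk V E xs \<Longrightarrow> walk V E ys \<Longrightarrow> last xs = hd ys \<Longrightarrow> walk V E (xs @ tl ys)"
proof (induction xs)
  case Nil thus ?case by simp
next
  case (Cons x xs)
  show ?case
  proof (cases "xs = []")
    case True
    then have "x = hd ys" using Cons by simp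
    moreover have "ys \<noteq> []" using Cons.prems(2) by auto
    ultimately show ?thesis using True Cons.prems(2) by simp
  next
    case False
    have w: "walk V E xs" "x \<in> V" "{x, hd xs} \<in> E" using Cons.prems(1) False walk_Cons by metis+
    have "walk V E (xs @ tl ys)" using Cons.IH w Cons.prems False by simp
    then show ?thesis using w False by (simp add: walk_Cons)
  qed
qed

lemma walk_rev: "walk V E xs \<Longrightarrow> walk V E (rev xs)"
proof (induction xs)
  case Nil thus ?case by simp
next
  case (Cons x xs)
  show ?case
  proof (cases "xs = []")
    case True thus ?thesis using Cons.prems by simp
  next
    case False
    have w: "walk V E xs" "x \<in> V" "{x, hd xs} \<in> E" using Cons.prems(1) False walk_Cons by metis+
    have hv: "hd xs \<in> V" using w(1) False unfolding walk_def by (simp add: hd_in_set subset_iff)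
    have w2: "walk V E [hd xs, x]" using w hv by (simp add: walk_Cons insert_commute)
    have "walk V E (rev xs @ tl [hd xs, x])"
      by (rule walk_append[OF Cons.IH[OF w(1)] w2]) (simp add: False last_rev)
    then show ?thesis by simp
  qed
qed

definition reach :: "'a set \<Rightarrow> 'a set set \<Rightarrow> 'a \<Rightarrow> 'a \<Rightarrow> bool" where
  "reach V E u v \<longleftrightarrow> (\<exists>xs. walk V E xs \<and> hd xs = u \<and> last xs = v)"

lemma reach_refl: "u \<in> V \<Longrightarrow> reach V E u u"
  unfolding reach_def by (rule exI[of _ "[u]"]) (simp add: walk_def)

lemma reach_sym: "reach V E u v \<Longrightarrow> reach V E v u"
  unfolding reach_def
  by (metis walk_rev walk_Nil hd_rev last_rev)

lemma reach_trans: "reach V E u v \<Longrightarrow> reach V E v w \<Longrightarrow> reach V E u w"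
proof -
  assume "reach V E u v" "reach V E v w"
  then obtain xs ys where xs: "walk V E xs" "hd xs = u" "last xs = v"
    and ys: "walk V E ys" "hd ys = v" "last ys = w" unfolding reach_def by blast
  have "walk V E (xs @ tl ys)" using walk_append xs ys by metis
  moreover have "xs \<noteq> []" "ys \<noteq> []" using xs ys walk_Nil by metis+
  moreover then have "last (xs @ tl ys) = w"
    using xs ys by (cases ys) (auto simp: last_append)
  ultimately show ?thesis unfolding reach_def using xs by (metis hd_append)
qed

lemma reach_mono: "reach V E u v \<Longrightarrow> V \<subseteq> V' \<Longrightarrow> E \<subseteq> E' \<Longrightarrow> reach V' E' u v"
  unfolding reach_def walk_def by blast

lemma connected_reach: "connected_graph V E \<longleftrightarrow> (\<forall>u\<in>V. \<forall>v\<in>V. reach V E u v)"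
  unfolding connected_graph_def reach_def by simp

lemma walk_take: "walk V E xs \<Longrightarrow> 0 < n \<Longrightarrow> walk V E (take n xs)"
  unfolding walk_def by (auto dest: in_set_takeD)

lemma walk_drop: "walk V E xs \<Longrightarrow> i < length xs \<Longrightarrow> walk V E (drop i xs)"
  unfolding walk_def by (auto dest: in_set_dropD simp: add.commute)

lemma gdist_le_iff:
  "gdist V E u v \<le> enat n \<longleftrightarrow> (\<exists>xs. walk V E xs \<and> hd xs = u \<and> last xs = v \<and> length xs - 1 \<le> n)"
proof
  define S where "S = {enat (length xs - 1) | xs. walk V E xs \<and> hd xs = u \<and> last xs = v}"
  assume a: "gdist V E u v \<le> enat n"
  have gd: "gdist V E u v = Inf S" unfolding gdist_def S_def by simp
  have ne: "S \<noteq> {}"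
  proof
    assume "S = {}"
    then have "gdist V E u v = \<infinity>" unfolding gd by (simp add: Inf_enat_def)
    with a show False by simp
  qed
  then obtain y where y: "y \<in> S" by blast
  have "(LEAST x. x \<in> S) \<in> S" by (rule LeastI[of "\<lambda>x. x \<in> S", OF y])
  moreover have "gdist V E u v = (LEAST x. x \<in> S)" using ne unfolding gd Inf_enat_def by simp
  ultimately have "gdist V E u v \<in> S" by simp
  then obtain xs where xs: "walk V E xs" "hd xs = u" "last xs = v" "gdist V E u v = enat (length xs - 1)"
    unfolding S_def by blast
  then have "length xs - 1 \<le> n" using a by simp
  with xs show "\<exists>xs. walk V E xs \<and> hd xs = u \<and> last xs = v \<and> length xs - 1 \<le> n" by blast
next
  assume "\<exists>xs. walk V E xs \<and> hd xs = u \<and> last xs = v \<and> length xs - 1 \<le> n"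
  then obtain xs where xs: "walk V E xs" "hd xs = u" "last xs = v" "length xs - 1 \<le> n" by blast
  then have "gdist V E u v \<le> enat (length xs - 1)" unfolding gdist_def
    by (intro Inf_lower) blast
  also have "\<dots> \<le> enat n" using xs(4) by simp
  finally show "gdist V E u v \<le> enat n" .
qed

lemma gdist_sym: "gdist V E u v \<le> enat n \<Longrightarrow> gdist V E v u \<le> enat n"
  unfolding gdist_le_iff by (metis walk_rev walk_Nil hd_rev last_rev length_rev)

lemma gdist_mono: "F \<subseteq> E \<Longrightarrow> gdist V F u v \<le> enat n \<Longrightarrow> gdist V E u v \<le> enat n"
  unfolding gdist_le_iff walk_def by blast

lemma gdist_refl: "u \<in> V \<Longrightarrow> gdist V E u u \<le> enat n"
  unfolding gdist_le_iff by (rule exI[of _ "[u]"]) (simp add: walk_def)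

lemma gdist_prefix: "walk V E xs \<Longrightarrow> l < length xs \<Longrightarrow> gdist V E (hd xs) (xs!l) \<le> enat l"
proof -
  assume w: "walk V E xs" and l: "l < length xs"
  have ne: "xs \<noteq> []" using w by auto
  have "last (take (Suc l) xs) = xs ! l" using l by (simp add: take_Suc_conv_app_nth)
  moreover have "hd (take (Suc l) xs) = hd xs" using ne by simp
  moreover have "length (take (Suc l) xs) - 1 \<le> l" by simp
  ultimately show ?thesis unfolding gdist_le_iff using walk_take[OF w zero_less_Suc, of l] by blast
qed

lemma gdist_suffix: "walk V E xs \<Longrightarrow> l < length xs \<Longrightarrow> gdist V E (xs!l) (last xs) \<le> enat (length xs - 1 - l)"
proof -
  assume w: "walk V E xs" and l: "l < length xs"
  have "hd (drop l xs) = xs ! l" using l by (simp add: hd_drop_conv_nth)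
  moreover have "last (drop l xs) = last xs" using l by simp
  moreover have "length (drop l xs) - 1 \<le> length xs - 1 - l" by simp
  ultimately show ?thesis unfolding gdist_le_iff using walk_drop[OF w l] by metis
qed

lemma edge_card2: "card e = 2 \<Longrightarrow> \<exists>u v. e = {u, v} \<and> u \<noteq> v"
  by (metis card_2_iff)

lemma spanner_edge:
  assumes sp: "spanner V E H t" and e: "{u, v} \<in> E" and uv: "u \<in> V" "v \<in> V"
  shows "gdist V H u v \<le> enat t"
proof -
  have "gdist V E u v \<le> enat 1" unfolding gdist_le_iff
    by (rule exI[of _ "[u, v]"]) (simp add: walk_Cons e uv)
  then obtain m where m: "gdist V E u v = enat m" "m \<le> 1"
    by (cases "gdist V E u v") auto
  have "gdist V H u v \<le> enat t * gdist V E u v" using sp uv unfolding spanner_def by blast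
  also have "\<dots> = enat (t * m)" using m by simp
  also have "\<dots> \<le> enat t" using m by (cases m) auto
  finally show ?thesis .
qed

theorem lemma15:
  fixes V :: "'a set" and E :: "'a set set" and t k :: nat
  assumes "graph V E" and "V \<noteq> {}" and "connected_graph V E"
    and "t \<ge> 1" and "k \<ge> 1"
    and "\<exists>F. spanner V E F t \<and> treewidth V F = k - 1"
  shows "int (tb k V E) \<le> \<lceil>real t / 2\<rceil>"
proof -
  obtain H where sp: "spanner V E H t" and tw: "treewidth V H = k - 1" using assms(6) by blast
  have HE: "H \<subseteq> E" using sp by (simp add: spanner_def)
  have gE: "\<And>e. e\<in>E \<Longrightarrow> card e = 2 \<and> e \<subseteq> V" using assms(1) by (auto simp: graph_def)
  have "\<exists>(I::nat set) FT X. tree_decomp V H I FT X \<and> td_width I X = treewidth V H"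
  proof -
    have tr: "tree {0::nat} {}"
      unfolding tree_def graph_def connected_reach by (auto intro: reach_refl)
    have "tree_decomp V H {0::nat} {} (\<lambda>_. V)"
      unfolding tree_decomp_def using tr HE gE
      by (auto simp: connected_reach intro: reach_refl)
    hence "\<exists>w (I::nat set) FT X. tree_decomp V H I FT X \<and> td_width I X = w" by blast
    then show ?thesis unfolding treewidth_def by (rule LeastI_ex)
  qed
  then obtain I :: "nat set" and FT X where td: "tree_decomp V H I FT X" and wd: "td_width I X = k - 1"
    using tw by auto
  have trI: "tree I FT" and XV: "\<And>i. i \<in> I \<Longrightarrow> X i \<subseteq> V" and UX: "(\<Union>i\<in>I. X i) = V"
    and EX: "\<And>e. e \<in> H \<Longrightarrow> \<exists>i\<in>I. e \<subseteq> X i"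
    and CX: "\<And>v. v \<in> V \<Longrightarrow> connected_graph {i\<in>I. v \<in> X i} {f\<in>FT. f \<subseteq> {i\<in>I. v \<in> X i}}"
    using td unfolding tree_decomp_def by auto
  have finI: "finite I" using trI unfolding tree_def graph_def by simp
  have cardX: "\<And>i. i \<in> I \<Longrightarrow> card (X i) \<le> k"
  proof -
    fix i assume i: "i \<in> I"
    have "card (X i) \<le> Max ((\<lambda>i. card (X i)) ` I)" using finI i by simp
    then show "card (X i) \<le> k" using wd assms(5) unfolding td_width_def by linarith
  qed
  define r where "r = (t + 1) div 2"
  define X' where "X' i = {u\<in>V. \<exists>x\<in>X i. gdist V H u x \<le> enat r}" for i
  have X'V: "\<And>i. X' i \<subseteq> V" unfolding X'_def by blast
  have un: "(\<Union>i\<in>I. X' i) = V"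
  proof
    show "(\<Union>i\<in>I. X' i) \<subseteq> V" using X'V by blast
  next
    show "V \<subseteq> (\<Union>i\<in>I. X' i)"
    proof
      fix v assume v: "v \<in> V"
      then obtain i where "i \<in> I" "v \<in> X i" using UX by blast
      then show "v \<in> (\<Union>i\<in>I. X' i)" unfolding X'_def using v gdist_refl[OF v] by blast
    qed
  qed
  have ed: "\<forall>e\<in>E. \<exists>i\<in>I. e \<subseteq> X' i"
  proof
    fix e assume e: "e \<in> E"
    obtain u v where uv: "e = {u, v}" "u \<noteq> v" using edge_card2 gE[OF e] by blast
    have uV: "u \<in> V" and vV: "v \<in> V" using gE[OF e] uv by auto
    have "gdist V H u v \<le> enat t" using spanner_edge[OF sp _ uV vV] e uv by simp
    then obtain xs where xs: "walk V H xs" "hd xs = u" "last xs = v" "length xs - 1 \<le> t"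
      unfolding gdist_le_iff by blast
    define l where "l = length xs - 1"
    have ne: "xs \<noteq> []" using xs by auto
    have ml: "l div 2 < length xs" unfolding l_def using ne by (cases xs) auto
    define m where "m = xs ! (l div 2)"
    have mV: "m \<in> V" using xs(1) ml unfolding walk_def m_def by (meson nth_mem subsetD)
    then obtain j where j: "j \<in> I" "m \<in> X j" using UX by blast
    have "gdist V H u m \<le> enat (l div 2)" using gdist_prefix[OF xs(1) ml] xs(2) m_def by simp
    also have "enat (l div 2) \<le> enat r" unfolding r_def l_def using xs(4) by simp
    finally have um: "gdist V H u m \<le> enat r" .
    have "gdist V H m v \<le> enat (length xs - 1 - l div 2)" using gdist_suffix[OF xs(1) ml] xs(3) m_def by simp
    also have "enat (length xs - 1 - l div 2) \<le> enat r" unfolding r_def using xs(4) l_def by simp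
    finally have vm: "gdist V H v m \<le> enat r" by (rule gdist_sym)
    show "\<exists>i\<in>I. e \<subseteq> X' i" using j um vm uV vV uv unfolding X'_def by blast
  qed
  have co: "\<forall>v\<in>V. connected_graph {i\<in>I. v \<in> X' i} {f\<in>FT. f \<subseteq> {i\<in>I. v \<in> X' i}}"
  proof
    fix v assume vV: "v \<in> V"
    define S where "S = {i\<in>I. v \<in> X' i}"
    define ES where "ES = {f\<in>FT. f \<subseteq> S}"
    have sub: "{i\<in>I. b \<in> X i} \<subseteq> S" if "gdist V H v b \<le> enat r" for b
      using that vV unfolding S_def X'_def by blast
    have lift: "reach S ES i j" if "b \<in> V" "gdist V H v b \<le> enat r" "i \<in> I" "j \<in> I" "b \<in> X i" "b \<in> X j" for b i j
    proof -
      have "reach {i\<in>I. b \<in> X i} {f\<in>FT. f \<subseteq> {i\<in>I. b \<in> X i}} i j"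
        using CX[OF that(1)] that(3-6) unfolding connected_reach by blast
      then show ?thesis by (rule reach_mono) (use sub[OF that(2)] in \<open>auto simp: ES_def\<close>)
    qed
    obtain i0 where i0: "i0 \<in> I" "v \<in> X i0" using UX vV by blast
    have claim: "\<forall>j\<in>I. ws!l \<in> X j \<longrightarrow> reach S ES i0 j"
      if ws: "walk V H ws" "hd ws = v" "length ws - 1 \<le> r" and l: "l < length ws" for ws l
      using l
    proof (induction l)
      case 0
      have "ws ! 0 = v" using ws by (metis hd_conv_nth walk_Nil)
      then show ?case using lift[OF vV gdist_refl[OF vV] i0(1) _ i0(2)] by auto
    next
      case (Suc l)
      have a: "{ws!l, ws!Suc l} \<in> H" using ws(1) Suc.prems unfolding walk_def by blast
      obtain j1 where j1: "j1 \<in> I" "{ws!l, ws!Suc l} \<subseteq> X j1" using EX[OF a] by blast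
      have r1: "reach S ES i0 j1" using Suc.IH Suc.prems j1 by auto
      have bV: "ws ! Suc l \<in> V" using ws(1) Suc.prems unfolding walk_def by (meson nth_mem subsetD)
      have "gdist V H v (ws ! Suc l) \<le> enat (Suc l)" using gdist_prefix[OF ws(1) Suc.prems] ws(2) by simp
      also have "\<dots> \<le> enat r" using Suc.prems ws(3) by simp
      finally have gb: "gdist V H v (ws ! Suc l) \<le> enat r" .
      show ?case
      proof (intro ballI impI)
        fix j assume "j \<in> I" "ws ! Suc l \<in> X j"
        then have "reach S ES j1 j" using lift[OF bV gb j1(1)] j1(2) by auto
        then show "reach S ES i0 j" using r1 reach_trans by metis
      qed
    qed
    have toall: "reach S ES i0 j" if jS: "j \<in> S" for j
    proof -
      obtain x where x: "x \<in> X j" "gdist V H v x \<le> enat r" "j \<in> I" using jS unfolding S_def X'_def by blast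
      then obtain ws where ws: "walk V H ws" "hd ws = v" "last ws = x" "length ws - 1 \<le> r"
        unfolding gdist_le_iff by blast
      have ne: "ws \<noteq> []" using ws by auto
      have "ws ! (length ws - 1) = x" using ws(3) ne by (simp add: last_conv_nth)
      then show ?thesis using claim[OF ws(1,2,4), of "length ws - 1"] ne x by auto
    qed
    show "connected_graph {i\<in>I. v \<in> X' i} {f\<in>FT. f \<subseteq> {i\<in>I. v \<in> X' i}}"
      unfolding connected_reach S_def[symmetric] ES_def[symmetric]
      using toall reach_sym reach_trans by metis
  qed
  have td': "tree_decomp V E I FT X'"
    unfolding tree_decomp_def using trI X'V un ed co by blast
  have br: "breadth_le V E k I X' r"
    unfolding breadth_le_def
  proof
    fix i assume i: "i \<in> I"
    have fin: "finite (X i)" using XV[OF i] assms(1) unfolding graph_def by (meson finite_subset)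
    obtain h where h: "bij_betw h {0..<card (X i)} (X i)" using ex_bij_betw_nat_finite[OF fin] by blast
    obtain v0 where v0: "v0 \<in> V" using assms(2) by blast
    define c where "c j = (if j < card (X i) then h j else v0)" for j
    have cV: "\<forall>j<k. c j \<in> V"
      using h XV[OF i] v0 unfolding c_def bij_betw_def by auto
    have "X' i \<subseteq> (\<Union>j<k. disk V E r (c j))"
    proof
      fix u assume "u \<in> X' i"
      then obtain x where x: "x \<in> X i" "gdist V H u x \<le> enat r" "u \<in> V" unfolding X'_def by blast
      obtain j where j: "j < card (X i)" "x = h j" proof -
        have "x \<in> h ` {0..<card (X i)}" using h x(1) unfolding bij_betw_def by simp
        then show ?thesis using that by auto
      qed
      have "j < k" using j cardX[OF i] by simp
      moreover have "c j = x" using j unfolding c_def by simp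
      moreover have "u \<in> disk V E r x" unfolding disk_def using x gdist_mono[OF HE] by blast
      ultimately show "u \<in> (\<Union>j<k. disk V E r (c j))" by blast
    qed
    then show "\<exists>c::nat \<Rightarrow> 'a. (\<forall>j<k. c j \<in> V) \<and> X' i \<subseteq> (\<Union>j<k. disk V E r (c j))"
      using cV by blast
  qed
  have "tb k V E \<le> r" unfolding tb_def
    by (rule Least_le) (use td' br in blast)
  then have "int (tb k V E) \<le> int r" by simp
  also have "int r \<le> \<lceil>real t / 2\<rceil>"
  proof -
    have "2 * r \<le> t + 1" unfolding r_def by simp
    then have "2 * real r \<le> real t + 1" by linarith
    then show ?thesis by (simp add: le_ceiling_iff)
  qed
  finally show ?thesis .
qed

end
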